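(* Let $n\ge1$, let $G$ be a group and $H$ a subgroup of $G$ with $G=HZ_n(G)$. Then $(H,H)$ and $(H,G)$ are relatively $n$-isoclinic, and $(H,G)$ and $(G,G)$ are relatively $n$-isoclinic.
   Context: Commutators: $[x,y]=x^{-1}y^{-1}xy$, left-normed $[x_1,\dots,x_{m+1}]=[[x_1,\dots,x_m],x_{m+1}]$. $Z_n(G)$ is the $n$-th term of the upper central series. $[_nH,G]$ is the subgroup generated by all $[h_1,\dots,h_n,g]$, $h_i\in H$, $g\in G$. Relative $n$-isoclinism: for groups $G_1,G_2$ and subgroups $H_i\le G_i$, $(H_1,G_1)$ and $(H_2,G_2)$ are relatively $n$-isoclinic if there is a pair $(\alpha,\beta)$ such that: (i) $\alpha: G_1/Z_n(G_1)\to G_2/Z_n(G_2)$ is an isomorphism mapping $H_1Z_n(G_1)/Z_n(G_1)$ (identified with $H_1/(Z_n(G_1)\cap H_1)$) onto $H_2Z_n(G_2)/Z_n(G_2)$; (ii) $\beta:[_nH_1,G_1]\to[_nH_2,G_2]$ is an isomorphism; (iii) for all $h_1,\dots,h_n\in H_1$, $g\in G_1$: $\beta([h_1,\dots,h_n,g])=[k_1,\dots,k_n,g']$ whenever $k_i\in H_2$, $k_iZ_n(G_2)=\alpha(h_iZ_n(G_1))$ and $g'Z_n(G_2)=\alpha(gZ_n(G_1))$. *)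

theory Defs
  imports "HOL-Algebra.Algebra"
begin

definition comm :: "('a, 'b) monoid_scheme \<Rightarrow> 'a \<Rightarrow> 'a \<Rightarrow> 'a" where
  "comm G x y = inv\<^bsub>G\<^esub> x \<otimes>\<^bsub>G\<^esub> inv\<^bsub>G\<^esub> y \<otimes>\<^bsub>G\<^esub> x \<otimes>\<^bsub>G\<^esub> y"

fun lcomm :: "('a, 'b) monoid_scheme \<Rightarrow> 'a list \<Rightarrow> 'a" where
  "lcomm G [] = \<one>\<^bsub>G\<^esub>"
| "lcomm G (x # xs) = foldl (comm G) x xs"

text \<open>Upper central series: Z_0 = 1, Z_(n+1)/Z_n = Z(G/Z_n).\<close>
primrec upper_central :: "('a, 'b) monoid_scheme \<Rightarrow> nat \<Rightarrow> 'a set" where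
  "upper_central G 0 = {\<one>\<^bsub>G\<^esub>}"
| "upper_central G (Suc n) =
     {x \<in> carrier G. \<forall>y \<in> carrier G. comm G x y \<in> upper_central G n}"

definition rel_comm_sub :: "nat \<Rightarrow> 'a set \<Rightarrow> ('a, 'b) monoid_scheme \<Rightarrow> 'a set" where
  "rel_comm_sub n H G = generate G
     {lcomm G (hs @ [g]) | hs g. length hs = n \<and> set hs \<subseteq> H \<and> g \<in> carrier G}"

definition rel_n_isoclinic ::
  "nat \<Rightarrow> 'a set \<Rightarrow> ('a, 'b) monoid_scheme \<Rightarrow> 'c set \<Rightarrow> ('c, 'd) monoid_scheme \<Rightarrow> bool" where
  "rel_n_isoclinic n H1 G1 H2 G2 \<longleftrightarrow>
    (let Z1 = upper_central G1 n; Z2 = upper_central G2 n in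
     \<exists>\<alpha> \<beta>.
       \<alpha> \<in> iso (G1 Mod Z1) (G2 Mod Z2) \<and>
       \<alpha> ` ((\<lambda>h. Z1 #>\<^bsub>G1\<^esub> h) ` H1) = (\<lambda>k. Z2 #>\<^bsub>G2\<^esub> k) ` H2 \<and>
       \<beta> \<in> iso (subgroup_generated G1 (rel_comm_sub n H1 G1))
               (subgroup_generated G2 (rel_comm_sub n H2 G2)) \<and>
       (\<forall>hs g ks g'.
          length hs = n \<and> set hs \<subseteq> H1 \<and> g \<in> carrier G1 \<and>
          length ks = n \<and> set ks \<subseteq> H2 \<and> g' \<in> carrier G2 \<and>
          (\<forall>i<n. Z2 #>\<^bsub>G2\<^esub> (ks ! i) = \<alpha> (Z1 #>\<^bsub>G1\<^esub> (hs ! i))) \<and>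
          Z2 #>\<^bsub>G2\<^esub> g' = \<alpha> (Z1 #>\<^bsub>G1\<^esub> g)
          \<longrightarrow> \<beta> (lcomm G1 (hs @ [g])) = lcomm G2 (ks @ [g'])))"

end

theory Submission
  imports Defs
begin


context group begin
lemma cancel1 [simp]: "x \<in> carrier G \<Longrightarrow> y \<in> carrier G \<Longrightarrow> x \<otimes> (inv x \<otimes> y) = y"
  by (simp add: m_assoc[symmetric])
lemma cancel2 [simp]: "x \<in> carrier G \<Longrightarrow> y \<in> carrier G \<Longrightarrow> inv x \<otimes> (x \<otimes> y) = y"
  by (simp add: m_assoc[symmetric])
lemma comm_closed[simp]: "x \<in> carrier G \<Longrightarrow> y \<in> carrier G \<Longrightarrow> comm G x y \<in> carrier G"
  by (simp add: comm_def)
lemma comm_mult_left: "x \<in> carrier G \<Longrightarrow> x' \<in> carrier G \<Longrightarrow> y \<in> carrier G \<Longrightarrow>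
  comm G (x \<otimes> x') y = inv x' \<otimes> comm G x y \<otimes> x' \<otimes> comm G x' y"
  by (simp add: comm_def m_assoc inv_mult_group)
lemma comm_inv: "x \<in> carrier G \<Longrightarrow> y \<in> carrier G \<Longrightarrow> inv (comm G x y) = comm G y x"
  by (simp add: comm_def m_assoc inv_mult_group)
lemma comm_inv_left: "x \<in> carrier G \<Longrightarrow> y \<in> carrier G \<Longrightarrow> comm G (inv x) y = x \<otimes> inv (comm G x y) \<otimes> inv x"
  by (simp add: comm_def m_assoc inv_mult_group)
lemma comm_mult_right: "a \<in> carrier G \<Longrightarrow> b \<in> carrier G \<Longrightarrow> c \<in> carrier G \<Longrightarrow>
  comm G a (b \<otimes> c) = comm G a c \<otimes> (inv c \<otimes> comm G a b \<otimes> c)"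
  by (simp add: comm_def m_assoc inv_mult_group)
lemma conj_comm: "x \<in> carrier G \<Longrightarrow> g \<in> carrier G \<Longrightarrow> g \<otimes> x \<otimes> inv g = x \<otimes> comm G x (inv g)"
  by (simp add: comm_def m_assoc inv_mult_group)
lemma comm_inv_right: "w \<in> carrier G \<Longrightarrow> d \<in> carrier G \<Longrightarrow> comm G w (inv d) = d \<otimes> comm G d w \<otimes> inv d"
  by (simp add: comm_def m_assoc inv_mult_group)
lemma comm_one: "y \<in> carrier G \<Longrightarrow> comm G \<one> y = \<one>"
  by (simp add: comm_def)
lemma hall_witt: "x \<in> carrier G \<Longrightarrow> y \<in> carrier G \<Longrightarrow> z \<in> carrier G \<Longrightarrow>
  (y \<otimes> comm G (comm G x y) z \<otimes> inv y) \<otimes> ((inv z \<otimes> comm G (comm G (inv y) (inv z)) x \<otimes> z)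
  \<otimes> (inv x \<otimes> comm G (comm G z (inv x)) (inv y) \<otimes> x)) = \<one>"
  by (simp add: comm_def m_assoc inv_mult_group)

lemma conj_mem1: "N \<lhd> G \<Longrightarrow> h \<in> N \<Longrightarrow> g \<in> carrier G \<Longrightarrow> g \<otimes> h \<otimes> inv g \<in> N"
  by (simp add: normal_inv_iff)
lemma conj_mem2: "N \<lhd> G \<Longrightarrow> h \<in> N \<Longrightarrow> g \<in> carrier G \<Longrightarrow> inv g \<otimes> h \<otimes> g \<in> N"
  using conj_mem1[of N h "inv g"] by simp

lemma uc_carrier: "upper_central G k \<subseteq> carrier G"
  by (cases k) auto

lemma uc_mono: "upper_central G k \<subseteq> upper_central G (Suc k)"
proof (induction k)
  case 0 show ?case by (auto simp: comm_one)
next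
  case (Suc k) thus ?case by auto
qed

lemma uc_normal: "upper_central G k \<lhd> G"
proof (induction k)
  case 0 show ?case using one_is_normal by simp
next
  case (Suc k)
  have sk: "subgroup (upper_central G k) G" using Suc normal_imp_subgroup by blast
  have sub: "subgroup (upper_central G (Suc k)) G"
  proof (rule subgroupI)
    show "upper_central G (Suc k) \<subseteq> carrier G" by auto
    show "upper_central G (Suc k) \<noteq> {}" using uc_mono[of k] subgroup.one_closed[OF sk] by blast
  next
    fix a assume a: "a \<in> upper_central G (Suc k)"
    hence ac: "a \<in> carrier G" by auto
    { fix y assume y: "y \<in> carrier G"
      have "comm G a y \<in> upper_central G k" using a y by auto
      hence "inv (comm G a y) \<in> upper_central G k" by (rule subgroup.m_inv_closed[OF sk])
      hence "a \<otimes> inv (comm G a y) \<otimes> inv a \<in> upper_central G k"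
        using conj_mem1[OF Suc] ac by blast
      hence "comm G (inv a) y \<in> upper_central G k" using comm_inv_left ac y by simp }
    thus "inv a \<in> upper_central G (Suc k)" using ac by auto
  next
    fix a b assume a: "a \<in> upper_central G (Suc k)" and b: "b \<in> upper_central G (Suc k)"
    hence ac: "a \<in> carrier G" and bc: "b \<in> carrier G" by auto
    { fix y assume y: "y \<in> carrier G"
      have "inv b \<otimes> comm G a y \<otimes> b \<in> upper_central G k"
        using a y conj_mem2[OF Suc] bc by auto
      moreover have "comm G b y \<in> upper_central G k" using b y by auto
      ultimately have "comm G (a \<otimes> b) y \<in> upper_central G k"
        using comm_mult_left[OF ac bc y] subgroup.m_closed[OF sk] by metis }
    thus "a \<otimes> b \<in> upper_central G (Suc k)" using ac bc by auto
  qed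
  show ?case unfolding normal_inv_iff
  proof (intro conjI sub ballI)
    fix g h assume g: "g \<in> carrier G" and h: "h \<in> upper_central G (Suc k)"
    have hc: "h \<in> carrier G" using h by auto
    have "comm G h (inv g) \<in> upper_central G (Suc k)" using h g uc_mono[of k] by auto
    thus "g \<otimes> h \<otimes> inv g \<in> upper_central G (Suc k)"
      using conj_comm[OF hc g] subgroup.m_closed[OF sub h] by simp
  qed
qed

lemma uc_subgroup: "subgroup (upper_central G k) G"
  by (rule normal_imp_subgroup[OF uc_normal])

lemma comm_Z1: "w \<in> upper_central G (Suc k) \<Longrightarrow> g \<in> carrier G \<Longrightarrow> comm G w g \<in> upper_central G k"
  by auto
lemma comm_Z2: "w \<in> upper_central G (Suc k) \<Longrightarrow> g \<in> carrier G \<Longrightarrow> comm G g w \<in> upper_central G k"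
proof -
  assume w: "w \<in> upper_central G (Suc k)" and g: "g \<in> carrier G"
  have "inv (comm G w g) \<in> upper_central G k"
    by (rule subgroup.m_inv_closed[OF uc_subgroup comm_Z1[OF w g]])
  have "w \<in> carrier G" using w uc_carrier by blast
  thus ?thesis using comm_inv[of w g] \<open>inv (comm G w g) \<in> upper_central G k\<close> g by simp
qed

definition Kp :: "nat \<Rightarrow> 'a \<Rightarrow> bool" where
  "Kp p c \<longleftrightarrow> c \<in> carrier G \<and>
     (\<forall>j w. p \<le> j \<longrightarrow> w \<in> upper_central G j \<longrightarrow> comm G c w \<in> upper_central G (j - p))"

lemma Kp_1: "c \<in> carrier G \<Longrightarrow> Kp 1 c"
  unfolding Kp_def
proof (intro conjI allI impI)
  fix j w assume c: "c \<in> carrier G" and j: "1 \<le> j" and w: "w \<in> upper_central G j"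
  obtain j1 where j1: "j = Suc j1" using j by (cases j) auto
  show "comm G c w \<in> upper_central G (j - 1)" using comm_Z2[of w j1 c] w c j1 by simp
qed

lemma Kp_step: assumes d: "Kp p d" and y: "y \<in> carrier G" shows "Kp (Suc p) (comm G d y)"
  unfolding Kp_def
proof (intro conjI allI impI)
  have dc: "d \<in> carrier G" using d Kp_def by blast
  show "comm G d y \<in> carrier G" using dc y by simp
  fix j w assume j: "Suc p \<le> j" and w: "w \<in> upper_central G j"
  have wc: "w \<in> carrier G" using w uc_carrier by blast
  obtain j1 where j1: "j = Suc j1" using j by (cases j) auto
  let ?N = "upper_central G (j - Suc p)"
  have nN: "?N \<lhd> G" by (rule uc_normal)
  have sN: "subgroup ?N G" by (rule uc_subgroup)
  have wi: "inv w \<in> upper_central G j" by (rule subgroup.m_inv_closed[OF uc_subgroup w])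
  define u where "u = comm G (inv y) (inv w)"
  have u: "u \<in> upper_central G j1" unfolding u_def using comm_Z2[of "inv w" j1 "inv y"] wi j1 y by simp
  have uc: "u \<in> carrier G" using u uc_carrier by blast
  have "comm G d u \<in> upper_central G (j1 - p)" using d u j j1 unfolding Kp_def by auto
  hence "comm G d u \<in> ?N" using j1 by simp
  hence "inv (comm G d u) \<in> ?N" by (rule subgroup.m_inv_closed[OF sN])
  hence "comm G u d \<in> ?N" using comm_inv uc dc by simp
  hence B: "inv w \<otimes> comm G u d \<otimes> w \<in> ?N" using conj_mem2[OF nN] wc by blast
  have "comm G d w \<in> upper_central G (j - p)" using d w j unfolding Kp_def by auto
  hence "d \<otimes> comm G d w \<otimes> inv d \<in> upper_central G (j - p)" using conj_mem1[OF uc_normal] dc by blast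
  hence v: "comm G w (inv d) \<in> upper_central G (Suc (j - Suc p))"
    using comm_inv_right wc dc j by (simp add: Suc_diff_Suc)
  hence "comm G (comm G w (inv d)) (inv y) \<in> ?N" using comm_Z1 y by blast
  hence C: "inv d \<otimes> comm G (comm G w (inv d)) (inv y) \<otimes> d \<in> ?N" using conj_mem2[OF nN] dc by blast
  define A where "A = y \<otimes> comm G (comm G d y) w \<otimes> inv y"
  define BB where "BB = inv w \<otimes> comm G u d \<otimes> w"
  define CC where "CC = inv d \<otimes> comm G (comm G w (inv d)) (inv y) \<otimes> d"
  have hw: "A \<otimes> (BB \<otimes> CC) = \<one>" unfolding A_def BB_def CC_def u_def
    using hall_witt[OF dc y wc] by simp
  have BBc: "BB \<in> carrier G" unfolding BB_def using uc wc dc by simp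
  have CCc: "CC \<in> carrier G" unfolding CC_def using wc dc y by simp
  have Ac: "A \<in> carrier G" unfolding A_def using wc dc y by simp
  have "inv (BB \<otimes> CC) = A" using inv_equality[OF hw] BBc CCc Ac by simp
  moreover have "BB \<otimes> CC \<in> ?N" unfolding BB_def CC_def by (rule subgroup.m_closed[OF sN B C])
  ultimately have AN: "A \<in> ?N" using subgroup.m_inv_closed[OF sN] by metis
  have "inv y \<otimes> A \<otimes> y = comm G (comm G d y) w" unfolding A_def using dc y wc
    by (simp add: m_assoc)
  thus "comm G (comm G d y) w \<in> upper_central G (j - Suc p)"
    using conj_mem2[OF nN AN y] by simp
qed

end


context group begin

lemma Kp_carrier: "Kp p c \<Longrightarrow> c \<in> carrier G"
  unfolding Kp_def by blast

lemma rcos_mem_carrier: "x \<in> carrier G \<Longrightarrow> y \<in> upper_central G k #> x \<Longrightarrow> y \<in> carrier G"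
  using uc_subgroup[of k] by (auto simp: r_coset_def dest: subgroup.mem_carrier)

lemma wd_foldl:
  "list_all2 (\<lambda>y y'. y \<in> carrier G \<and> y' \<in> upper_central G n #> y) ys ys' \<Longrightarrow>
   Kp p acc \<Longrightarrow> 1 \<le> p \<Longrightarrow> acc' \<in> upper_central G (n + 1 - p) #> acc \<Longrightarrow>
   p + length ys = n + 1 \<Longrightarrow> foldl (comm G) acc' ys' = foldl (comm G) acc ys"
proof (induction ys ys' arbitrary: acc acc' p rule: list_all2_induct)
  case Nil
  have "p = n + 1" using Nil by simp
  hence "acc' \<in> {\<one>} #> acc" using Nil by simp
  thus ?case using Kp_carrier[OF Nil(1)] by (auto simp: r_coset_def)
next
  case (Cons y ys y' ys')
  have ac: "acc \<in> carrier G" using Kp_carrier[OF Cons.prems(1)] .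
  have yc: "y \<in> carrier G" using Cons.hyps(1) by blast
  have pn: "p \<le> n" using Cons.prems(4) by simp
  obtain k1 where k1: "n + 1 - p = Suc k1" "k1 = n - p" using pn by (metis Suc_diff_le add.commute plus_1_eq_Suc)
  obtain u where u: "u \<in> upper_central G (Suc k1)" and acc': "acc' = u \<otimes> acc"
    using Cons.prems(3) k1 by (auto simp: r_coset_def)
  obtain v where v: "v \<in> upper_central G n" and y': "y' = v \<otimes> y"
    using Cons.hyps(1) by (auto simp: r_coset_def)
  have uc: "u \<in> carrier G" using u uc_carrier by blast
  have vc: "v \<in> carrier G" using v uc_carrier by blast
  have y'c: "y' \<in> carrier G" using y' vc yc by simp
  have sN: "subgroup (upper_central G k1) G" by (rule uc_subgroup)
  define a where "a = inv acc \<otimes> comm G u y' \<otimes> acc"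
  have a: "a \<in> upper_central G k1" unfolding a_def
    using conj_mem2[OF uc_normal comm_Z1[OF u y'c] ac] .
  have "comm G acc v \<in> upper_central G (n - p)" using Cons.prems(1) v pn unfolding Kp_def by blast
  hence b: "inv y \<otimes> comm G acc v \<otimes> y \<in> upper_central G k1" using k1 conj_mem2[OF uc_normal _ yc] by simp
  define b where "b = inv y \<otimes> comm G acc v \<otimes> y"
  define c where "c = comm G acc y"
  have cc: "c \<in> carrier G" unfolding c_def using ac yc by simp
  have b': "c \<otimes> b \<otimes> inv c \<in> upper_central G k1" using conj_mem1[OF uc_normal b[folded b_def] cc] .
  have ab: "a \<otimes> (c \<otimes> b \<otimes> inv c) \<in> upper_central G k1" by (rule subgroup.m_closed[OF sN a b'])
  have bc: "b \<in> carrier G" unfolding b_def using ac vc yc by simp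
  have e1: "comm G acc' y' = a \<otimes> comm G acc y'"
    unfolding acc' a_def by (rule comm_mult_left[OF uc ac y'c])
  have e2: "comm G acc y' = c \<otimes> b"
    unfolding y' b_def c_def using comm_mult_right[OF ac vc yc] by (simp add: m_assoc)
  have ac2: "a \<in> carrier G" unfolding a_def using ac uc y'c by simp
  have eq: "comm G acc' y' = (a \<otimes> (c \<otimes> b \<otimes> inv c)) \<otimes> c"
    unfolding e1 e2 using ac2 bc cc by (simp add: m_assoc)
  have ac': "comm G acc' y' \<in> upper_central G (n + 1 - Suc p) #> comm G acc y"
    using eq rcosI[OF ab uc_carrier cc] k1 unfolding c_def by simp
  have "foldl (comm G) (comm G acc' y') ys' = foldl (comm G) (comm G acc y) ys"
    by (rule Cons.IH[OF Kp_step[OF Cons.prems(1) yc] _ ac']) (use Cons.prems in auto)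
  thus ?case by simp
qed

lemma wd_lists:
  assumes "length hs = n" "length ks = n" "set hs \<subseteq> carrier G" "set ks \<subseteq> carrier G"
    "\<forall>i<n. upper_central G n #> (ks ! i) = upper_central G n #> (hs ! i)"
    "g \<in> carrier G" "g' \<in> carrier G" "upper_central G n #> g' = upper_central G n #> g"
  shows "lcomm G (ks @ [g']) = lcomm G (hs @ [g])"
proof -
  let ?P = "\<lambda>y y'. y \<in> carrier G \<and> y' \<in> upper_central G n #> y"
  have sZ: "subgroup (upper_central G n) G" by (rule uc_subgroup)
  have P: "list_all2 ?P (hs @ [g]) (ks @ [g'])"
  proof (rule list_all2_all_nthI)
    show "length (hs @ [g]) = length (ks @ [g'])" using assms by simp
    fix i assume i: "i < length (hs @ [g])"
    show "?P ((hs @ [g]) ! i) ((ks @ [g']) ! i)"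
    proof (cases "i < n")
      case True
      have "hs ! i \<in> carrier G" "ks ! i \<in> carrier G" using assms True by auto
      moreover have "ks ! i \<in> upper_central G n #> (ks ! i)" by (rule rcos_self[OF _ sZ]) (use calculation in simp)
      ultimately show ?thesis using True assms by (simp add: nth_append)
    next
      case False
      hence "i = n" using i assms by simp
      moreover have "g' \<in> upper_central G n #> g'" by (rule rcos_self[OF _ sZ]) (use assms in simp)
      ultimately show ?thesis using assms by (simp add: nth_append)
    qed
  qed
  obtain x xs where hx: "hs @ [g] = x # xs" by (cases "hs @ [g]") auto
  obtain x' xs' where kx: "ks @ [g'] = x' # xs'" by (cases "ks @ [g']") auto
  have P2: "?P x x'" "list_all2 ?P xs xs'" using P hx kx by auto
  have lx: "length xs = n" using arg_cong[OF hx, of length] assms by simp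
  have "foldl (comm G) x' xs' = foldl (comm G) x xs"
    by (rule wd_foldl[OF P2(2) Kp_1]) (use P2(1) lx in auto)
  thus ?thesis using hx kx by simp
qed

lemma uc_char:
  "x \<in> upper_central G n \<longleftrightarrow> x \<in> carrier G \<and>
     (\<forall>ys. length ys = n \<and> set ys \<subseteq> carrier G \<longrightarrow> foldl (comm G) x ys = \<one>)"
proof (induction n arbitrary: x)
  case 0 thus ?case by auto
next
  case (Suc n)
  show ?case
  proof
    assume x: "x \<in> upper_central G (Suc n)"
    hence xc: "x \<in> carrier G" by auto
    { fix ys :: "'a list" assume ys: "length ys = Suc n" "set ys \<subseteq> carrier G"
      then obtain y ys' where ys': "ys = y # ys'" by (cases ys) auto
      have "comm G x y \<in> upper_central G n" using x ys ys' by auto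
      hence "foldl (comm G) (comm G x y) ys' = \<one>" using Suc.IH ys ys' by auto
      hence "foldl (comm G) x ys = \<one>" using ys' by simp }
    thus "x \<in> carrier G \<and> (\<forall>ys. length ys = Suc n \<and> set ys \<subseteq> carrier G \<longrightarrow> foldl (comm G) x ys = \<one>)"
      using xc by blast
  next
    assume x: "x \<in> carrier G \<and> (\<forall>ys. length ys = Suc n \<and> set ys \<subseteq> carrier G \<longrightarrow> foldl (comm G) x ys = \<one>)"
    { fix y assume y: "y \<in> carrier G"
      { fix ys :: "'a list" assume ys: "length ys = n" "set ys \<subseteq> carrier G"
        hence "foldl (comm G) x (y # ys) = \<one>" using x y by (metis insert_subset length_Cons list.simps(15))
        hence "foldl (comm G) (comm G x y) ys = \<one>" by simp }
      hence "comm G x y \<in> upper_central G n" using Suc.IH x y by simp }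
    thus "x \<in> upper_central G (Suc n)" using x by auto
  qed
qed

end


context group begin
lemma foldl_comm_closed: "x \<in> carrier G \<Longrightarrow> set ys \<subseteq> carrier G \<Longrightarrow> foldl (comm G) x ys \<in> carrier G"
  by (induction ys arbitrary: x) auto
lemma lcomm_closed: "set xs \<subseteq> carrier G \<Longrightarrow> lcomm G xs \<in> carrier G"
  by (cases xs) (auto intro: foldl_comm_closed)
end

lemma id_iso_eq: "carrier A = carrier B \<Longrightarrow> monoid.mult A = monoid.mult B \<Longrightarrow> (\<lambda>x. x) \<in> iso A B"
  by (auto simp: iso_def hom_def bij_betw_def)

lemma r_coset_sub: "r_coset (subgroup_generated G S) = r_coset G"
  by (intro ext) (simp add: r_coset_def)

lemma comm_sub:
  assumes "group G" "subgroup H G" "a \<in> H" "b \<in> H"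
  shows "comm (subgroup_generated G H) a b = comm G a b"
proof -
  interpret group G by fact
  have "a \<in> carrier (subgroup_generated G H)" "b \<in> carrier (subgroup_generated G H)"
    using assms subgroup.carrier_subgroup_generated_subgroup by auto
  thus ?thesis by (simp add: comm_def)
qed

lemma comm_in_sub:
  assumes "group G" "subgroup H G" "a \<in> H" "b \<in> H"
  shows "comm G a b \<in> H"
  using assms by (simp add: comm_def subgroup.m_closed subgroup.m_inv_closed)

lemma foldl_sub:
  assumes "group G" "subgroup H G"
  shows "x \<in> H \<Longrightarrow> set ys \<subseteq> H \<Longrightarrow> foldl (comm (subgroup_generated G H)) x ys = foldl (comm G) x ys"
proof (induction ys arbitrary: x)
  case Nil thus ?case by simp
next
  case (Cons y ys)
  have "comm G x y \<in> H" using comm_in_sub[OF assms] Cons.prems by simp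
  thus ?case using Cons comm_sub[OF assms] by simp
qed

lemma lcomm_sub:
  assumes "group G" "subgroup H G" "set xs \<subseteq> H"
  shows "lcomm (subgroup_generated G H) xs = lcomm G xs"
  using assms foldl_sub[OF assms(1,2)] by (cases xs) auto



lemma (in group) main:
  fixes H :: "'a set" and n :: nat
  assumes "subgroup H G" and "n \<ge> 1"
    and "carrier G = H <#> upper_central G n"
  shows "rel_n_isoclinic n H (subgroup_generated G H) H G
       \<and> rel_n_isoclinic n H G (carrier G) G"
proof -
  note sH = assms(1)
  define Z where "Z = upper_central G n"
  have sZ: "subgroup Z G" unfolding Z_def by (rule uc_subgroup)
  have nZ: "Z \<lhd> G" unfolding Z_def by (rule uc_normal)
  have Hc: "H \<subseteq> carrier G" using sH subgroup.subset by blast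
  have Zc: "Z \<subseteq> carrier G" using sZ subgroup.subset by blast
  have rep: "\<exists>h\<in>H. Z #> g = Z #> h" if g: "g \<in> carrier G" for g
  proof -
    obtain h z where hz: "h \<in> H" "z \<in> Z" "g = h \<otimes> z"
      using g assms(3) unfolding Z_def set_mult_def by blast
    have hc: "h \<in> carrier G" and zc: "z \<in> carrier G" using hz Hc Zc by auto
    have "h \<otimes> z \<otimes> inv h \<in> Z" using conj_mem1[OF nZ hz(2) hc] .
    hence "(h \<otimes> z \<otimes> inv h) \<otimes> h \<in> Z #> h" using rcosI[OF _ Zc hc] by blast
    moreover have "(h \<otimes> z \<otimes> inv h) \<otimes> h = g" using hz hc zc by (simp add: m_assoc)
    ultimately have "Z #> h = Z #> g" using repr_independence[OF _ hc sZ] by simp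
    thus ?thesis using hz by metis
  qed
  obtain f where f: "\<And>g. g \<in> carrier G \<Longrightarrow> f g \<in> H \<and> Z #> g = Z #> f g"
    using rep by metis
  have fc: "f g \<in> carrier G" if "g \<in> carrier G" for g using f[OF that] Hc by blast
  have wdl: "lcomm G (ks @ [g']) = lcomm G (hs @ [g])"
    if "length hs = n" "length ks = n" "set hs \<subseteq> carrier G" "set ks \<subseteq> carrier G"
      "\<forall>i<n. Z #> (ks ! i) = Z #> (hs ! i)"
      "g \<in> carrier G" "g' \<in> carrier G" "Z #> g' = Z #> g" for hs ks g g'
    using wd_lists[of hs n ks g g'] that unfolding Z_def by blast
  define SH where "SH = {lcomm G (hs @ [g]) | hs g. length hs = n \<and> set hs \<subseteq> H \<and> g \<in> carrier G}"
  have gen_all: "{lcomm G (ks @ [g]) | ks g. length ks = n \<and> set ks \<subseteq> carrier G \<and> g \<in> carrier G} = SH"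
  proof
    show "SH \<subseteq> {lcomm G (ks @ [g]) | ks g. length ks = n \<and> set ks \<subseteq> carrier G \<and> g \<in> carrier G}"
      unfolding SH_def using Hc by blast
  next
    show "{lcomm G (ks @ [g]) | ks g. length ks = n \<and> set ks \<subseteq> carrier G \<and> g \<in> carrier G} \<subseteq> SH"
    proof (rule subsetI)
      fix x assume "x \<in> {lcomm G (ks @ [g]) | ks g. length ks = n \<and> set ks \<subseteq> carrier G \<and> g \<in> carrier G}"
      then obtain ks g where ks: "length ks = n" "set ks \<subseteq> carrier G" and g: "g \<in> carrier G"
        and x: "x = lcomm G (ks @ [g])" by blast
      have eqi: "\<forall>i<n. Z #> (ks ! i) = Z #> (map f ks ! i)"
      proof (intro allI impI)
        fix i assume i: "i < n"
        hence "ks ! i \<in> carrier G" using ks nth_mem by blast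
        thus "Z #> (ks ! i) = Z #> (map f ks ! i)" using f i ks by simp
      qed
      have "lcomm G (ks @ [g]) = lcomm G (map f ks @ [g])"
        using wdl[of "map f ks" ks g g] ks g fc eqi by auto
      moreover have "set (map f ks) \<subseteq> H" using ks f by auto
      ultimately show "x \<in> SH" unfolding SH_def x using ks g by fastforce
    qed
  qed
  have gen_H: "{lcomm G (hs @ [h]) | hs h. length hs = n \<and> set hs \<subseteq> H \<and> h \<in> H} = SH"
  proof
    show "{lcomm G (hs @ [h]) | hs h. length hs = n \<and> set hs \<subseteq> H \<and> h \<in> H} \<subseteq> SH"
      unfolding SH_def using Hc by blast
  next
    show "SH \<subseteq> {lcomm G (hs @ [h]) | hs h. length hs = n \<and> set hs \<subseteq> H \<and> h \<in> H}"
    proof (rule subsetI)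
      fix x assume "x \<in> SH"
      then obtain hs g where hs: "length hs = n" "set hs \<subseteq> H" and g: "g \<in> carrier G"
        and x: "x = lcomm G (hs @ [g])" unfolding SH_def by blast
      have "lcomm G (hs @ [g]) = lcomm G (hs @ [f g])"
        using wdl[of hs hs "f g" g] hs g f fc Hc by auto
      thus "x \<in> {lcomm G (hs @ [h]) | hs h. length hs = n \<and> set hs \<subseteq> H \<and> h \<in> H}"
        using hs f[OF g] x by blast
    qed
  qed
  have P2: "rel_n_isoclinic n H G (carrier G) G"
    unfolding rel_n_isoclinic_def Let_def Z_def[symmetric]
  proof (intro exI conjI allI impI)
    show "(\<lambda>x. x) \<in> iso (G Mod Z) (G Mod Z)" by (rule iso_set_refl)
    show "(\<lambda>x. x) ` (\<lambda>h. Z #> h) ` H = (\<lambda>k. Z #> k) ` carrier G"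
      using Hc f by (auto simp: image_iff)
    have "rel_comm_sub n H G = rel_comm_sub n (carrier G) G"
      unfolding rel_comm_sub_def using gen_all unfolding SH_def by simp
    thus "(\<lambda>x. x) \<in> iso (subgroup_generated G (rel_comm_sub n H G)) (subgroup_generated G (rel_comm_sub n (carrier G) G))"
      using iso_set_refl by simp
    fix hs g ks g'
    assume a: "length hs = n \<and> set hs \<subseteq> H \<and> g \<in> carrier G \<and> length ks = n \<and> set ks \<subseteq> carrier G \<and> g' \<in> carrier G \<and>
       (\<forall>i<n. Z #> ks ! i = Z #> hs ! i) \<and> Z #> g' = Z #> g"
    show "lcomm G (hs @ [g]) = lcomm G (ks @ [g'])"
      using wdl[of hs ks g g'] a Hc by auto
  qed
  define G1 where "G1 = subgroup_generated G H"
  have gG1: "group G1" unfolding G1_def by simp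
  have cG1: "carrier G1 = H" unfolding G1_def using subgroup.carrier_subgroup_generated_subgroup[OF sH] .
  have mG1: "monoid.mult G1 = monoid.mult G" unfolding G1_def by simp
  have oG1: "\<one>\<^bsub>G1\<^esub> = \<one>" unfolding G1_def by simp
  have rG1: "r_coset G1 = r_coset G" unfolding G1_def by (rule r_coset_sub)
  have lG1: "lcomm G1 xs = lcomm G xs" if "set xs \<subseteq> H" for xs
    unfolding G1_def by (rule lcomm_sub[OF is_group sH that])
  have fG1: "foldl (comm G1) x ys = foldl (comm G) x ys" if "x \<in> H" "set ys \<subseteq> H" for x ys
    unfolding G1_def by (rule foldl_sub[OF is_group sH that])
  define Z1 where "Z1 = upper_central G1 n"
  have Z1eq: "Z1 = H \<inter> Z"
  proof (rule equalityI[OF subsetI subsetI])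
    fix x assume x: "x \<in> Z1"
    hence xH: "x \<in> H" and all: "\<forall>ys. length ys = n \<and> set ys \<subseteq> H \<longrightarrow> foldl (comm G) x ys = \<one>"
      unfolding Z1_def group.uc_char[OF gG1] cG1 oG1 using fG1 by auto
    have xc: "x \<in> carrier G" using xH Hc by blast
    { fix ys :: "'a list" assume ys: "length ys = n" "set ys \<subseteq> carrier G"
      have la: "list_all2 (\<lambda>y y'. y \<in> carrier G \<and> y' \<in> upper_central G n #> y) (map f ys) ys"
      proof (rule list_all2_all_nthI)
        show "length (map f ys) = length ys" by simp
        fix i assume i: "i < length (map f ys)"
        hence yi: "ys ! i \<in> carrier G" using ys nth_mem by fastforce
        have "ys ! i \<in> Z #> (ys ! i)" by (rule rcos_self[OF yi sZ])
        thus "map f ys ! i \<in> carrier G \<and> ys ! i \<in> upper_central G n #> (map f ys ! i)"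
          using f[OF yi] fc[OF yi] i unfolding Z_def by simp
      qed
      have "x \<in> upper_central G (n + 1 - 1) #> x" using rcos_self[OF xc sZ] unfolding Z_def by simp
      hence "foldl (comm G) x ys = foldl (comm G) x (map f ys)"
        using wd_foldl[OF la Kp_1[OF xc]] ys by simp
      also have "\<dots> = \<one>"
      proof -
        have "set (map f ys) \<subseteq> H" using ys f by auto
        thus ?thesis using all ys by simp
      qed
      finally have "foldl (comm G) x ys = \<one>" . }
    hence "x \<in> Z" unfolding Z_def uc_char using xc by blast
    thus "x \<in> H \<inter> Z" using xH by blast
  next
    fix x assume x: "x \<in> H \<inter> Z"
    hence "x \<in> upper_central G n" unfolding Z_def by blast
    hence "\<forall>ys. length ys = n \<and> set ys \<subseteq> carrier G \<longrightarrow> foldl (comm G) x ys = \<one>"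
      using uc_char by blast
    thus "x \<in> Z1" unfolding Z1_def group.uc_char[OF gG1] cG1 oG1 using fG1 x Hc by auto
  qed
  define \<phi> where "\<phi> = (\<lambda>h. Z #> h)"
  have hom: "\<phi> \<in> hom G1 (G Mod Z)"
  proof (rule homI)
    fix x assume "x \<in> carrier G1"
    thus "\<phi> x \<in> carrier (G Mod Z)" unfolding \<phi>_def cG1 FactGroup_def using Hc Zc rcosetsI by auto
  next
    fix x y assume "x \<in> carrier G1" "y \<in> carrier G1"
    hence "x \<in> carrier G" "y \<in> carrier G" using cG1 Hc by auto
    thus "\<phi> (x \<otimes>\<^bsub>G1\<^esub> y) = \<phi> x \<otimes>\<^bsub>G Mod Z\<^esub> \<phi> y"
      unfolding \<phi>_def using normal.rcos_sum[OF nZ] by (simp add: mG1 FactGroup_def)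
  qed
  have gh: "group_hom G1 (G Mod Z) \<phi>"
    unfolding group_hom_def group_hom_axioms_def using gG1 hom normal.factorgroup_is_group[OF nZ] by simp
  have ker: "kernel G1 (G Mod Z) \<phi> = Z1"
  proof -
    have "x \<in> Z" if "x \<in> H" "Z #> x = Z" for x
      using rcos_self[of x Z] that Hc sZ by auto
    moreover have "Z #> x = Z" if "x \<in> H" "x \<in> Z" for x
      using coset_join2[of x Z] that Hc sZ by auto
    ultimately show ?thesis unfolding kernel_def cG1 Z1eq \<phi>_def by (auto simp: FactGroup_def)
  qed
  have onto: "\<phi> ` carrier G1 = carrier (G Mod Z)"
  proof
    show "\<phi> ` carrier G1 \<subseteq> carrier (G Mod Z)" using hom by (auto simp: hom_def)
    show "carrier (G Mod Z) \<subseteq> \<phi> ` carrier G1"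
    proof
      fix W assume "W \<in> carrier (G Mod Z)"
      then obtain g where g: "g \<in> carrier G" "W = Z #> g" by (auto simp: FactGroup_def RCOSETS_def)
      thus "W \<in> \<phi> ` carrier G1" unfolding \<phi>_def cG1 using f[OF g(1)] by auto
    qed
  qed
  define \<alpha> where "\<alpha> = (\<lambda>W. the_elem (\<phi> ` W))"
  have aiso: "\<alpha> \<in> iso (G1 Mod Z1) (G Mod Z)"
    using group_hom.FactGroup_iso_set[OF gh onto] unfolding ker \<alpha>_def .
  have aev: "\<alpha> (Z1 #>\<^bsub>G1\<^esub> h) = Z #> h" if h: "h \<in> H" for h
  proof -
    have hc: "h \<in> carrier G" using h Hc by blast
    have "\<phi> ` (Z1 #> h) = {Z #> h}"
    proof
      show "\<phi> ` (Z1 #> h) \<subseteq> {Z #> h}"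
      proof
        fix Y assume "Y \<in> \<phi> ` (Z1 #> h)"
        then obtain z where z: "z \<in> Z1" "Y = Z #> (z \<otimes> h)" unfolding \<phi>_def r_coset_def by auto
        have "z \<otimes> h \<in> Z #> h" using rcosI[OF _ Zc hc] z Z1eq by blast
        thus "Y \<in> {Z #> h}" using repr_independence[OF _ hc sZ] z by simp
      qed
      have "\<one> \<in> Z1" using Z1eq sZ sH subgroup.one_closed by blast
      hence "\<one> \<otimes> h \<in> Z1 #> h" unfolding r_coset_def by blast
      thus "{Z #> h} \<subseteq> \<phi> ` (Z1 #> h)" unfolding \<phi>_def using hc by force
    qed
    thus ?thesis unfolding \<alpha>_def rG1 by simp
  qed
  have SH_H: "SH \<subseteq> H"
  proof -
    have "lcomm G1 (hs @ [h]) \<in> H" if "set hs \<subseteq> H" "h \<in> H" for hs h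
      using group.lcomm_closed[OF gG1, of "hs @ [h]"] that cG1 by simp
    thus ?thesis unfolding gen_H[symmetric] using lG1 by fastforce
  qed
  define R where "R = generate G SH"
  have RH: "R \<subseteq> H" unfolding R_def by (rule generate_subgroup_incl[OF SH_H sH])
  have G1eq: "G1 = G\<lparr>carrier := H\<rparr>"
    using cG1 unfolding G1_def subgroup_generated_def by simp
  have genG1: "generate G1 W = generate G W" if "W \<subseteq> H" for W
    unfolding G1eq by (rule generate_consistent[OF that sH])
  have rcs1: "rel_comm_sub n H G1 = R"
  proof -
    have "{lcomm G1 (hs @ [g]) | hs g. length hs = n \<and> set hs \<subseteq> H \<and> g \<in> carrier G1} =
          {lcomm G (hs @ [h]) | hs h. length hs = n \<and> set hs \<subseteq> H \<and> h \<in> H}"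
      unfolding cG1 using lG1 by (metis (no_types, lifting) Un_subset_iff empty_set list.simps(15) set_append singletonI empty_subsetI insert_subset)
    thus ?thesis unfolding rel_comm_sub_def gen_H R_def using genG1[OF SH_H] by simp
  qed
  have rcs2: "rel_comm_sub n H G = R" unfolding rel_comm_sub_def R_def SH_def by simp
  have P1: "rel_n_isoclinic n H G1 H G"
    unfolding rel_n_isoclinic_def Let_def Z_def[symmetric] Z1_def[symmetric]
  proof (intro exI conjI allI impI)
    show "\<alpha> \<in> iso (G1 Mod Z1) (G Mod Z)" by (rule aiso)
    show "\<alpha> ` (\<lambda>h. Z1 #>\<^bsub>G1\<^esub> h) ` H = (\<lambda>k. Z #> k) ` H"
      using aev by (auto simp: image_iff)
    have "carrier (subgroup_generated G1 (rel_comm_sub n H G1)) = carrier (subgroup_generated G (rel_comm_sub n H G))"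
      unfolding rcs1 rcs2 carrier_subgroup_generated cG1 using RH genG1[OF RH] Hc
      by (simp add: Int_absorb1 subset_trans[OF RH Hc])
    thus "(\<lambda>x. x) \<in> iso (subgroup_generated G1 (rel_comm_sub n H G1)) (subgroup_generated G (rel_comm_sub n H G))"
      by (rule id_iso_eq) (simp add: mG1)
    fix hs g ks g'
    assume a: "length hs = n \<and> set hs \<subseteq> H \<and> g \<in> carrier G1 \<and> length ks = n \<and> set ks \<subseteq> H \<and> g' \<in> carrier G \<and>
       (\<forall>i<n. Z #> ks ! i = \<alpha> (Z1 #>\<^bsub>G1\<^esub> hs ! i)) \<and> Z #> g' = \<alpha> (Z1 #>\<^bsub>G1\<^esub> g)"
    have gH: "g \<in> H" using a cG1 by simp
    have "\<forall>i<n. Z #> ks ! i = Z #> hs ! i" using a aev nth_mem by (metis subsetD)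
    moreover have "Z #> g' = Z #> g" using a aev[OF gH] by simp
    ultimately have "lcomm G (hs @ [g]) = lcomm G (ks @ [g'])"
    proof -
      have c: "set hs \<subseteq> carrier G" "set ks \<subseteq> carrier G" "g \<in> carrier G" using a Hc gH by auto
      assume e: "\<forall>i<n. Z #> ks ! i = Z #> hs ! i" "Z #> g' = Z #> g"
      show ?thesis using wdl[of hs ks g g'] a c e by simp
    qed
    moreover have "lcomm G1 (hs @ [g]) = lcomm G (hs @ [g])" using lG1 a gH by simp
    ultimately show "lcomm G1 (hs @ [g]) = lcomm G (ks @ [g'])" by simp
  qed
  show ?thesis using P1 P2 unfolding G1_def by simp
qed

theorem lemma2p3:
  fixes G :: "('a, 'b) monoid_scheme" and H :: "'a set" and n :: nat
  assumes "group G" and "subgroup H G" and "n \<ge> 1"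
    and "carrier G = H <#>\<^bsub>G\<^esub> upper_central G n"
  shows "rel_n_isoclinic n H (subgroup_generated G H) H G
       \<and> rel_n_isoclinic n H G (carrier G) G"
  using group.main[OF assms] .


end
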